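(* Let $(X,\mathcal{M},\mu)$ be a measure space with $0<\mu(X)<\infty$, and $\Phi$ an $N^*$-function for which there is a constant $k\ge2$ with $\Phi(kx)=2\Phi(x)$ for all $x>0$. Then for every $f\in L^1(X)$, $$\|f\|_\Phi\le\frac{1}{\mu(X)\,\Phi^{-1}\big(\frac{1}{\mu(X)}\big)}\,\|f\|_{L^1}.$$
   Context: An $N^*$-function is a function $\Phi:\mathbb{R}\to\mathbb{R}$ of the form $\Phi(x)=\int_0^{|x|}p(t)\,dt<+\infty$ for all $x$, where $p:[0,\infty)\to[0,\infty]$ is right-continuous, positive on $(0,\infty)$, non-increasing, and satisfies $\lim_{t\to0^+}p(t)=+\infty$ and $\lim_{t\to+\infty}p(t)=0$. $\Phi^{-1}$ is the inverse of $\Phi|_{[0,\infty)}$. $\|f\|_\Phi=\inf\{\lambda>0:\int_X\Phi(|f|/\lambda)\,d\mu\le1\}$. *)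

theory Defs
  imports "HOL-Analysis.Analysis"
begin

text \<open>The value p 0 (= +oo in the paper) is irrelevant for the integral and is not constrained.\<close>
definition N_star_function :: "(real \<Rightarrow> real) \<Rightarrow> bool" where
  "N_star_function Phi \<longleftrightarrow> (\<exists>p :: real \<Rightarrow> real.
      (\<forall>t>0. p t > 0) \<and>
      (\<forall>s t. 0 < s \<and> s \<le> t \<longrightarrow> p t \<le> p s) \<and>
      (\<forall>t>0. continuous (at_right t) p) \<and>
      filterlim p at_top (at_right 0) \<and>
      (p \<longlongrightarrow> 0) at_top \<and>
      (\<forall>x. set_integrable lborel {0..\<bar>x\<bar>} p \<and>
           Phi x = (LINT t:{0..\<bar>x\<bar>}|lborel. p t)))"

definition Phi_inv :: "(real \<Rightarrow> real) \<Rightarrow> real \<Rightarrow> real" where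
  "Phi_inv Phi y = (THE x. 0 \<le> x \<and> Phi x = y)"

definition orlicz_norm :: "'a measure \<Rightarrow> (real \<Rightarrow> real) \<Rightarrow> ('a \<Rightarrow> real) \<Rightarrow> real" where
  "orlicz_norm M Phi f =
     Inf {c::real. c > 0 \<and> (\<integral>\<^sup>+ x. ennreal (Phi (\<bar>f x\<bar> / c)) \<partial>M) \<le> 1}"

end

theory Submission
  imports Defs
begin

lemma const_set_integrable: "set_integrable lborel {x<..y::real} (\<lambda>_. c::real)"
  unfolding set_integrable_def
  by (cases "x \<le> y") (simp_all add: integrable_indicator_iff)

lemma phi_diff:
  fixes p Phi :: "real \<Rightarrow> real"
  assumes hp: "\<forall>x. set_integrable lborel {0..\<bar>x\<bar>} p \<and> Phi x = (LINT t:{0..\<bar>x\<bar>}|lborel. p t)"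
    and "0 \<le> x" "x \<le> y"
  shows "Phi y - Phi x = (LINT t:{x<..y}|lborel. p t) \<and> set_integrable lborel {x<..y} p"
proof -
  have i: "set_integrable lborel {0..y} p" using hp[rule_format, of y] assms by simp
  have i2: "set_integrable lborel {x<..y} p"
    by (rule set_integrable_subset[OF i]) (use assms in auto)
  have i1: "set_integrable lborel {0..x} p"
    by (rule set_integrable_subset[OF i]) (use assms in auto)
  have u: "{0..y} = {0..x} \<union> {x<..y}" using assms by auto
  have "(LINT t:{0..y}|lborel. p t) = (LINT t:{0..x}|lborel. p t) + (LINT t:{x<..y}|lborel. p t)"
    unfolding u by (rule set_integral_Un[OF _ i1 i2]) auto
  moreover have "Phi y = (LINT t:{0..y}|lborel. p t)" "Phi x = (LINT t:{0..x}|lborel. p t)"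
    using hp assms by auto
  ultimately show ?thesis using i2 by simp
qed

lemma phi_upper:
  fixes p Phi :: "real \<Rightarrow> real"
  assumes hp: "\<forall>x. set_integrable lborel {0..\<bar>x\<bar>} p \<and> Phi x = (LINT t:{0..\<bar>x\<bar>}|lborel. p t)"
    and mono: "\<forall>s t. 0 < s \<and> s \<le> t \<longrightarrow> p t \<le> p s"
    and "0 < x" "x \<le> y"
  shows "Phi y - Phi x \<le> p x * (y - x)"
proof -
  have d: "Phi y - Phi x = (LINT t:{x<..y}|lborel. p t)" and i: "set_integrable lborel {x<..y} p"
    using phi_diff[OF hp, of x y] assms by auto
  have "(LINT t:{x<..y}|lborel. p t) \<le> (LINT t:{x<..y}|lborel. p x)"
    by (rule set_integral_mono[OF i const_set_integrable]) (use mono assms in auto)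
  also have "\<dots> = p x * (y - x)" using assms by (subst set_integral_const) auto
  finally show ?thesis using d by simp
qed

lemma phi_lower:
  fixes p Phi :: "real \<Rightarrow> real"
  assumes hp: "\<forall>x. set_integrable lborel {0..\<bar>x\<bar>} p \<and> Phi x = (LINT t:{0..\<bar>x\<bar>}|lborel. p t)"
    and mono: "\<forall>s t. 0 < s \<and> s \<le> t \<longrightarrow> p t \<le> p s"
    and "0 \<le> x" "x \<le> y"
  shows "p y * (y - x) \<le> Phi y - Phi x"
proof -
  have d: "Phi y - Phi x = (LINT t:{x<..y}|lborel. p t)" and i: "set_integrable lborel {x<..y} p"
    using phi_diff[OF hp, of x y] assms by auto
  have "p y * (y - x) = (LINT t:{x<..y}|lborel. p y)" using assms by (subst set_integral_const) auto
  also have "\<dots> \<le> (LINT t:{x<..y}|lborel. p t)"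
    by (rule set_integral_mono[OF const_set_integrable i]) (use mono assms in auto)
  finally show ?thesis using d by simp
qed

lemma phi_zero:
  fixes p Phi :: "real \<Rightarrow> real"
  assumes hp: "\<forall>x. set_integrable lborel {0..\<bar>x\<bar>} p \<and> Phi x = (LINT t:{0..\<bar>x\<bar>}|lborel. p t)"
  shows "Phi 0 = 0"
proof -
  have "Phi 0 = (LINT t:{0..0}|lborel. p t)" using hp by auto
  also have "\<dots> = (LINT t:{0..0::real}|lborel. p 0)"
    unfolding set_lebesgue_integral_def
    by (rule Bochner_Integration.integral_cong) (auto simp: indicator_def)
  also have "\<dots> = 0" by (subst set_integral_const) auto
  finally show ?thesis .
qed

theorem mainTheorem11:
  fixes M :: "'a measure" and Phi :: "real \<Rightarrow> real" and f :: "'a \<Rightarrow> real"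
  assumes "0 < emeasure M (space M)" and "emeasure M (space M) < \<infinity>"
    and "N_star_function Phi"
    and "\<exists>k::real. k \<ge> 2 \<and> (\<forall>x>0. Phi (k * x) = 2 * Phi x)"
    and "integrable M f"
  shows "orlicz_norm M Phi f
     \<le> 1 / (measure M (space M) * Phi_inv Phi (1 / measure M (space M)))
        * (\<integral>x. \<bar>f x\<bar> \<partial>M)"
proof -
  obtain p :: "real \<Rightarrow> real" where ppos: "\<forall>t>0. p t > 0"
    and mono: "\<forall>s t. 0 < s \<and> s \<le> t \<longrightarrow> p t \<le> p s"
    and hp: "\<forall>x. set_integrable lborel {0..\<bar>x\<bar>} p \<and> Phi x = (LINT t:{0..\<bar>x\<bar>}|lborel. p t)"
    using assms(3) unfolding N_star_function_def by blast
  obtain k :: real where k2: "k \<ge> 2" and hk: "\<forall>x>0. Phi (k * x) = 2 * Phi x"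
    using assms(4) by blast
  interpret finite_measure M using assms(2) by (intro finite_measureI) auto
  define m where "m = measure M (space M)"
  have m0: "m > 0" unfolding m_def using assms(1) emeasure_eq_measure by auto
  define y0 where "y0 = 1 / m"
  have y0: "y0 > 0" using m0 unfolding y0_def by auto
  have Phi0: "Phi 0 = 0" by (rule phi_zero[OF hp])
  have smono: "Phi x < Phi y" if "0 \<le> x" "x < y" for x y
  proof -
    have "p y * (y - x) \<le> Phi y - Phi x" using phi_lower[OF hp mono, of x y] that by auto
    moreover have "p y * (y - x) > 0" using ppos that by auto
    ultimately show ?thesis by linarith
  qed
  define q where "q = Phi 1"
  have q: "q > 0" unfolding q_def using smono[of 0 1] Phi0 by auto
  have up: "Phi (k ^ n) = 2 ^ n * q" for n
  proof (induction n)
    case 0 then show ?case by (simp add: q_def)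
  next
    case (Suc n)
    have "k ^ n > 0" using k2 by auto
    then have "Phi (k * k ^ n) = 2 * Phi (k ^ n)" using hk by auto
    then show ?case using Suc by simp
  qed
  have down: "Phi (1 / k ^ n) = q / 2 ^ n" for n
  proof (induction n)
    case 0 then show ?case by (simp add: q_def)
  next
    case (Suc n)
    have "1 / k ^ Suc n > 0" using k2 by auto
    then have "Phi (k * (1 / k ^ Suc n)) = 2 * Phi (1 / k ^ Suc n)" by (rule hk[rule_format])
    moreover have "k * (1 / k ^ Suc n) = 1 / k ^ n" using k2 by (simp add: field_simps)
    ultimately show ?case using Suc by (simp add: field_simps)
  qed
  obtain n :: nat where n: "max (q / y0) (y0 / q) < 2 ^ n"
    using real_arch_pow[of 2 "max (q / y0) (y0 / q)"] by auto
  define lo where "lo = 1 / k ^ n"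
  define hi where "hi = k ^ n"
  have lo0: "lo > 0" unfolding lo_def using k2 by auto
  have k1: "k ^ n \<ge> 1" using k2 by (simp add: one_le_power)
  have lohi: "lo \<le> hi" unfolding lo_def hi_def using k1
    by (metis divide_le_eq_1 dual_order.trans less_eq_real_def zero_less_one)
  have "q / y0 < 2 ^ n" using n by auto
  then have Plo: "Phi lo \<le> y0" unfolding lo_def down using y0 q
    by (simp add: field_simps)
  have "y0 / q < 2 ^ n" using n by auto
  then have Phi: "y0 \<le> Phi hi" unfolding hi_def up using y0 q
    by (simp add: field_simps)
  have lip: "(p lo)-lipschitz_on {lo..hi} Phi"
  proof (rule lipschitz_onI)
    fix x y assume xy: "x \<in> {lo..hi}" "y \<in> {lo..hi}"
    show "dist (Phi x) (Phi y) \<le> p lo * dist x y"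
    proof (cases "x \<le> y")
      case True
      have "Phi y - Phi x \<le> p x * (y - x)" using phi_upper[OF hp mono, of x y] True xy lo0 by auto
      moreover have "p x \<le> p lo" using mono xy lo0 by auto
      moreover have "Phi x \<le> Phi y" using smono[of x y] True xy lo0 by (cases "x = y") auto
      ultimately show ?thesis using True
        by (simp add: dist_real_def) (smt (verit) mult_right_mono)
    next
      case False
      have "Phi x - Phi y \<le> p y * (x - y)" using phi_upper[OF hp mono, of y x] False xy lo0 by auto
      moreover have "p y \<le> p lo" using mono xy lo0 by auto
      moreover have "Phi y \<le> Phi x" using smono[of y x] False xy lo0 by auto
      ultimately show ?thesis using False
        by (simp add: dist_real_def) (smt (verit) mult_right_mono)
    qed
  next
    show "0 \<le> p lo" using ppos lo0 by (simp add: less_imp_le)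
  qed
  have cont: "continuous_on {lo..hi} Phi" by (rule lipschitz_on_continuous_on[OF lip])
  obtain a0 where a0: "lo \<le> a0" "a0 \<le> hi" "Phi a0 = y0"
    using IVT'[of Phi lo y0 hi, OF Plo Phi lohi cont] by auto
  have theE: "Phi_inv Phi y0 = a0" unfolding Phi_inv_def
  proof (rule the_equality)
    show "0 \<le> a0 \<and> Phi a0 = y0" using a0 lo0 by auto
  next
    fix x assume x: "0 \<le> x \<and> Phi x = y0"
    show "x = a0"
    proof (rule ccontr)
      assume "x \<noteq> a0"
      then consider "x < a0" | "a0 < x" by linarith
      then show False using smono[of x a0] smono[of a0 x] x a0 lo0 by cases auto
    qed
  qed
  define a where "a = a0"
  have a0p: "a > 0" "Phi a = y0" using a0 lo0 unfolding a_def by auto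
  have Pa: "Phi a = 1 / m" using a0p y0_def by simp
  have pa: "p a > 0" using ppos a0p by auto
  have Pge: "p a * a \<le> Phi a" using phi_lower[OF hp mono, of 0 a] a0p Phi0 by auto
  have tang: "Phi y \<le> Phi a + p a * (y - a)" if "0 \<le> y" for y
  proof (cases "a \<le> y")
    case True then show ?thesis using phi_upper[OF hp mono, of a y] a0p by auto
  next
    case False then show ?thesis using phi_lower[OF hp mono, of y a] that by (auto simp: algebra_simps)
  qed
  define N where "N = (\<integral>x. \<bar>f x\<bar> \<partial>M)"
  have N0: "N \<ge> 0" unfolding N_def by simp
  define c0 where "c0 = 1 / (m * a) * N"
  have c00: "c0 \<ge> 0" unfolding c0_def using m0 a0p N0 by auto
  define S where "S = {c::real. c > 0 \<and> (\<integral>\<^sup>+ x. ennreal (Phi (\<bar>f x\<bar> / c)) \<partial>M) \<le> 1}"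
  have inS: "c \<in> S" if c: "c > c0" for c
  proof -
    have cpos: "c > 0" using c c00 by auto
    have Nc: "N \<le> c * m * a" using c m0 a0p unfolding c0_def by (simp add: field_simps)
    define C where "C = Phi a - p a * a"
    define D where "D = p a / c"
    have C0: "C \<ge> 0" using Pge unfolding C_def by simp
    have D0: "D \<ge> 0" using pa cpos unfolding D_def by simp
    define g where "g = (\<lambda>x. C + D * \<bar>f x\<bar>)"
    have gint: "integrable M g" unfolding g_def using assms(5) by auto
    have gnn: "\<And>x. g x \<ge> 0" unfolding g_def using C0 D0 by auto
    have "(\<integral>\<^sup>+ x. ennreal (Phi (\<bar>f x\<bar> / c)) \<partial>M) \<le> (\<integral>\<^sup>+ x. ennreal (g x) \<partial>M)"
    proof (rule nn_integral_mono)
      fix x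
      have "Phi (\<bar>f x\<bar> / c) \<le> Phi a + p a * (\<bar>f x\<bar> / c - a)" using tang cpos by auto
      also have "\<dots> = g x" unfolding g_def C_def D_def by (simp add: algebra_simps)
      finally show "ennreal (Phi (\<bar>f x\<bar> / c)) \<le> ennreal (g x)" by (rule ennreal_leI)
    qed
    also have "\<dots> = ennreal (integral\<^sup>L M g)"
      by (rule nn_integral_eq_integral[OF gint]) (use gnn in auto)
    also have "integral\<^sup>L M g = m * C + D * N"
      unfolding g_def N_def m_def using assms(5)
      by (subst Bochner_Integration.integral_add) auto
    also have "m * C + D * N \<le> 1"
    proof -
      have "D * N \<le> (p a / c) * (c * m * a)" unfolding D_def
        using Nc pa cpos by (intro mult_left_mono) auto
      also have "\<dots> = m * (p a * a)" using cpos by simp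
      finally show ?thesis unfolding C_def using Pa m0 by (simp add: algebra_simps)
    qed
    finally have "(\<integral>\<^sup>+ x. ennreal (Phi (\<bar>f x\<bar> / c)) \<partial>M) \<le> ennreal 1"
      by (simp add: ennreal_leI)
    then show ?thesis unfolding S_def using cpos by simp
  qed
  have "orlicz_norm M Phi f \<le> c0"
  proof (rule dense_ge)
    fix c assume "c0 < c"
    then have "c \<in> S" by (rule inS)
    moreover have "bdd_below S" unfolding S_def by (rule bdd_belowI[of _ 0]) auto
    ultimately have "Inf S \<le> c" by (rule cInf_lower)
    then show "orlicz_norm M Phi f \<le> c" unfolding orlicz_norm_def S_def .
  qed
  then show ?thesis unfolding c0_def N_def m_def using theE a_def y0_def m_def by simp
qed

end
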